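(* Let $k$ be a field of characteristic $0$ and let $\mathcal L$, $\mathcal L'$ be centreless Lie tori over $k$ of types $(\Delta,\Lambda)$ and $(\Delta',\Lambda')$ respectively. If $\mathcal L$ is isotopic to $\mathcal L'$, then $\Lambda/\Gamma(\mathcal L)\cong\Lambda'/\Gamma(\mathcal L')$ as groups.
   Context: An irreducible finite root system is a finite subset $\Delta$ of a finite-dimensional vector space with $0\in\Delta$ and $\Delta^\times:=\Delta\setminus\{0\}$ an irreducible (possibly non-reduced) root system in the usual sense; $Q=\mathrm{span}_{\mathbb Z}\Delta$, $\alpha^\vee$ coroots, $\Delta^\times_{\mathrm{ind}}=\Delta^\times\setminus2\Delta^\times$. Let $\Lambda$ be a finitely generated free abelian group. A Lie torus of type $(\Delta,\Lambda)$ is a Lie algebra $\mathcal L$ over $k$ with a $Q\times\Lambda$-grading $\mathcal L=\bigoplus\mathcal L_\alpha^\lambda$ ($\mathcal L_\alpha:=\bigoplus_\lambda\mathcal L_\alpha^\lambda$, $\mathcal L^\lambda:=\bigoplus_\alpha\mathcal L_\alpha^\lambda$) such that: (LT1) $\{\alpha:\mathcal L_\alpha\neq0\}=\Delta$; (LT2)(i) $\mathcal L_\alpha^0\neq0$ for $\alpha\in\Delta^\times_{\mathrm{ind}}$; (ii) whenever $\alpha\in\Delta^\times$ and $\mathcal L_\alpha^\lambda\ne0$ there are $e\in\mathcal L_\alpha^\lambda$, $f\in\mathcal L_{-\alpha}^{-\lambda}$ with $\mathcal L_\alpha^\lambda=ke$, $\mathcal L_{-\alpha}^{-\lambda}=kf$,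 $[[e,f],x]=\langle\beta,\alpha^\vee\rangle x$ for $x\in\mathcal L_\beta$, $\beta\in Q$; (LT3) $\mathcal L$ is generated by the $\mathcal L_\alpha$, $\alpha\in\Delta^\times$; (LT4) $\Lambda$ is generated by $\{\lambda:\mathcal L^\lambda\ne0\}$. Centreless = zero centre. Centroid $C=\{c\in\mathrm{End}_k\mathcal L:c[x,y]=[cx,y]=[x,cy]\}$; for $\lambda\in\Lambda$ put $C^\lambda=\{c\in C:c(\mathcal L^\mu)\subseteq\mathcal L^{\mu+\lambda}\ \forall\mu\in\Lambda\}$; then $C=\bigoplus_\lambda C^\lambda$ and $\Gamma(\mathcal L):=\{\lambda:C^\lambda\ne0\}$ is a subgroup of $\Lambda$. An isotopy from $\mathcal L$ onto $\mathcal L'$ is an algebra isomorphism $\varphi$ such that $\varphi(\mathcal L_\alpha^\lambda)=\mathcal L'^{\,\varphi_e(\lambda)+\varphi_s(\alpha)}_{\varphi_r(\alpha)}$ for all $\alpha\in Q$, $\lambda\in\Lambda$, where $\varphi_r:Q\to Q'=\mathrm{span}_{\mathbb Z}\Delta'$ and $\varphi_e:\Lambda\to\Lambda'$ are group isomorphisms and $\varphi_s:Q\to\Lambda'$ is a group homomorphism; $\mathcal L$ and $\mathcal L'$ are isotopic if such an isotopy exists. *)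

theory Defs
  imports "HOL-Analysis.Analysis" "HOL-Algebra.Coset"
begin

definition zmult :: "int \<Rightarrow> 'g::ab_group_add \<Rightarrow> 'g" where
  "zmult n x = (if 0 \<le> n then (\<Sum>_\<in>{..<nat n}. x) else - (\<Sum>_\<in>{..<nat (- n)}. x))"

definition fg_free_abelian :: "'g::ab_group_add itself \<Rightarrow> bool" where
  "fg_free_abelian _ \<longleftrightarrow> (\<exists>bs::'g list. \<forall>x::'g. \<exists>!c::int list.
      length c = length bs \<and> x = (\<Sum>i<length bs. zmult (c ! i) (bs ! i)))"

definition addgrp :: "'g::ab_group_add itself \<Rightarrow> 'g monoid" where
  "addgrp _ = \<lparr>carrier = UNIV, mult = (+), one = 0\<rparr>"

definition coroot_pair :: "'v::euclidean_space \<Rightarrow> 'v \<Rightarrow> real" where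
  "coroot_pair \<beta> \<alpha> = 2 * (\<beta> \<bullet> \<alpha>) / (\<alpha> \<bullet> \<alpha>)"

text \<open>Integer value of the pairing <beta, alpha^vee> (an integer whenever beta lies in the root lattice).\<close>
definition coroot_int :: "'v::euclidean_space \<Rightarrow> 'v \<Rightarrow> int" where
  "coroot_int \<beta> \<alpha> = \<lfloor>coroot_pair \<beta> \<alpha>\<rfloor>"

text \<open>A (possibly non-reduced) root system in the usual sense, in a Euclidean space.\<close>
definition root_system :: "'v::euclidean_space set \<Rightarrow> bool" where
  "root_system R \<longleftrightarrow> finite R \<and> 0 \<notin> R \<and> span R = UNIV \<and>
     (\<forall>\<alpha>\<in>R. \<forall>\<beta>\<in>R. coroot_pair \<beta> \<alpha> \<in> \<int> \<and> \<beta> - coroot_pair \<beta> \<alpha> *\<^sub>R \<alpha> \<in> R)"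

definition irreducible_root_system :: "'v::euclidean_space set \<Rightarrow> bool" where
  "irreducible_root_system R \<longleftrightarrow> root_system R \<and> R \<noteq> {} \<and>
     (\<forall>A B. A \<union> B = R \<longrightarrow> A \<inter> B = {} \<longrightarrow> (\<forall>a\<in>A. \<forall>b\<in>B. a \<bullet> b = 0) \<longrightarrow> A = {} \<or> B = {})"

definition irred_finite_root_system :: "'v::euclidean_space set \<Rightarrow> bool" where
  "irred_finite_root_system \<Delta> \<longleftrightarrow> finite \<Delta> \<and> 0 \<in> \<Delta> \<and> irreducible_root_system (\<Delta> - {0})"

definition root_lattice :: "'v::euclidean_space set \<Rightarrow> 'v set" where
  "root_lattice \<Delta> = {x. \<exists>c::'v \<Rightarrow> int. x = (\<Sum>\<alpha>\<in>\<Delta>. real_of_int (c \<alpha>) *\<^sub>R \<alpha>)}"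

definition indivisible_roots :: "'v::euclidean_space set \<Rightarrow> 'v set" where
  "indivisible_roots \<Delta> = (\<Delta> - {0}) - (\<lambda>x. 2 *\<^sub>R x) ` (\<Delta> - {0})"

definition lie_algebra :: "('k::field \<Rightarrow> 'L::ab_group_add \<Rightarrow> 'L) \<Rightarrow> ('L \<Rightarrow> 'L \<Rightarrow> 'L) \<Rightarrow> bool" where
  "lie_algebra sc br \<longleftrightarrow> vector_space sc \<and>
     (\<forall>x y z. br (x + y) z = br x z + br y z) \<and>
     (\<forall>x y z. br x (y + z) = br x y + br x z) \<and>
     (\<forall>a x y. br (sc a x) y = sc a (br x y)) \<and>
     (\<forall>a x y. br x (sc a y) = sc a (br x y)) \<and>
     (\<forall>x. br x x = 0) \<and>
     (\<forall>x y z. br x (br y z) + br y (br z x) + br z (br x y) = 0)"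

definition centreless :: "('L::ab_group_add \<Rightarrow> 'L \<Rightarrow> 'L) \<Rightarrow> bool" where
  "centreless br \<longleftrightarrow> (\<forall>z. (\<forall>x. br z x = 0) \<longrightarrow> z = 0)"

definition lie_subalgebra :: "('k::field \<Rightarrow> 'L::ab_group_add \<Rightarrow> 'L) \<Rightarrow> ('L \<Rightarrow> 'L \<Rightarrow> 'L) \<Rightarrow> 'L set \<Rightarrow> bool" where
  "lie_subalgebra sc br S \<longleftrightarrow> module.subspace sc S \<and> (\<forall>x\<in>S. \<forall>y\<in>S. br x y \<in> S)"

definition add_subgroup :: "'g::ab_group_add set \<Rightarrow> bool" where
  "add_subgroup H \<longleftrightarrow> 0 \<in> H \<and> (\<forall>x\<in>H. \<forall>y\<in>H. x + y \<in> H) \<and> (\<forall>x\<in>H. - x \<in> H)"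

text \<open>G alpha lambda is the homogeneous space L_alpha^lambda.  L_alpha (sum over lambda)
  and L^lambda (sum over alpha) are given as sets of finite sums.\<close>
definition root_space :: "('v \<Rightarrow> 'g \<Rightarrow> 'L::ab_group_add set) \<Rightarrow> 'v \<Rightarrow> 'L set" where
  "root_space G \<alpha> = {x. \<exists>S f. finite S \<and> (\<forall>l\<in>S. f l \<in> G \<alpha> l) \<and> x = sum f S}"

definition degree_space :: "('v \<Rightarrow> 'g \<Rightarrow> 'L::ab_group_add set) \<Rightarrow> 'g \<Rightarrow> 'L set" where
  "degree_space G l = {x. \<exists>S f. finite S \<and> (\<forall>\<alpha>\<in>S. f \<alpha> \<in> G \<alpha> l) \<and> x = sum f S}"

definition lie_torus ::
  "('k::field_char_0 \<Rightarrow> 'L::ab_group_add \<Rightarrow> 'L) \<Rightarrow> ('L \<Rightarrow> 'L \<Rightarrow> 'L) \<Rightarrow>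
   'v::euclidean_space set \<Rightarrow> ('v \<Rightarrow> 'g::ab_group_add \<Rightarrow> 'L set) \<Rightarrow> bool" where
  "lie_torus sc br \<Delta> G \<longleftrightarrow>
     lie_algebra sc br \<and> irred_finite_root_system \<Delta> \<and> fg_free_abelian TYPE('g) \<and>
     \<comment> \<open>Q x Lambda-grading\<close>
     (\<forall>\<alpha> l. module.subspace sc (G \<alpha> l)) \<and>
     (\<forall>\<alpha> l. \<alpha> \<notin> root_lattice \<Delta> \<longrightarrow> G \<alpha> l = {0}) \<and>
     (\<forall>x. \<exists>!c::'v \<Rightarrow> 'g \<Rightarrow> 'L. finite {p. c (fst p) (snd p) \<noteq> 0} \<and>
          (\<forall>\<alpha> l. c \<alpha> l \<in> G \<alpha> l) \<and>
          x = (\<Sum>p\<in>{p. c (fst p) (snd p) \<noteq> 0}. c (fst p) (snd p))) \<and>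
     (\<forall>\<alpha> \<beta> l m x y. x \<in> G \<alpha> l \<longrightarrow> y \<in> G \<beta> m \<longrightarrow> br x y \<in> G (\<alpha> + \<beta>) (l + m)) \<and>
     \<comment> \<open>(LT1)\<close>
     {\<alpha>. root_space G \<alpha> \<noteq> {0}} = \<Delta> \<and>
     \<comment> \<open>(LT2)(i)\<close>
     (\<forall>\<alpha>\<in>indivisible_roots \<Delta>. G \<alpha> 0 \<noteq> {0}) \<and>
     \<comment> \<open>(LT2)(ii)\<close>
     (\<forall>\<alpha>\<in>\<Delta> - {0}. \<forall>l. G \<alpha> l \<noteq> {0} \<longrightarrow>
        (\<exists>e\<in>G \<alpha> l. \<exists>f\<in>G (- \<alpha>) (- l).
           G \<alpha> l = range (\<lambda>a. sc a e) \<and> G (- \<alpha>) (- l) = range (\<lambda>a. sc a f) \<and>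
           (\<forall>\<beta>\<in>root_lattice \<Delta>. \<forall>x\<in>root_space G \<beta>.
              br (br e f) x = sc (of_int (coroot_int \<beta> \<alpha>)) x))) \<and>
     \<comment> \<open>(LT3)\<close>
     (\<forall>S. lie_subalgebra sc br S \<longrightarrow> (\<Union>\<alpha>\<in>\<Delta> - {0}. root_space G \<alpha>) \<subseteq> S \<longrightarrow> S = UNIV) \<and>
     \<comment> \<open>(LT4)\<close>
     (\<forall>H. add_subgroup H \<longrightarrow> {l. degree_space G l \<noteq> {0}} \<subseteq> H \<longrightarrow> H = UNIV)"

definition centroid :: "('k::field \<Rightarrow> 'L::ab_group_add \<Rightarrow> 'L) \<Rightarrow> ('L \<Rightarrow> 'L \<Rightarrow> 'L) \<Rightarrow> ('L \<Rightarrow> 'L) set" where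
  "centroid sc br = {c. (\<forall>x y. c (x + y) = c x + c y) \<and> (\<forall>a x. c (sc a x) = sc a (c x)) \<and>
       (\<forall>x y. c (br x y) = br (c x) y \<and> c (br x y) = br x (c y))}"

definition centroid_deg ::
  "('k::field \<Rightarrow> 'L::ab_group_add \<Rightarrow> 'L) \<Rightarrow> ('L \<Rightarrow> 'L \<Rightarrow> 'L) \<Rightarrow> ('v \<Rightarrow> 'g::ab_group_add \<Rightarrow> 'L set) \<Rightarrow> 'g \<Rightarrow> ('L \<Rightarrow> 'L) set" where
  "centroid_deg sc br G l = {c \<in> centroid sc br. \<forall>m. c ` degree_space G m \<subseteq> degree_space G (m + l)}"

definition Gamma ::
  "('k::field \<Rightarrow> 'L::ab_group_add \<Rightarrow> 'L) \<Rightarrow> ('L \<Rightarrow> 'L \<Rightarrow> 'L) \<Rightarrow> ('v \<Rightarrow> 'g::ab_group_add \<Rightarrow> 'L set) \<Rightarrow> 'g set" where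
  "Gamma sc br G = {l. centroid_deg sc br G l \<noteq> {\<lambda>x. 0}}"

definition lie_isomorphism ::
  "('k::field \<Rightarrow> 'L::ab_group_add \<Rightarrow> 'L) \<Rightarrow> ('L \<Rightarrow> 'L \<Rightarrow> 'L) \<Rightarrow>
   ('k \<Rightarrow> 'M::ab_group_add \<Rightarrow> 'M) \<Rightarrow> ('M \<Rightarrow> 'M \<Rightarrow> 'M) \<Rightarrow> ('L \<Rightarrow> 'M) \<Rightarrow> bool" where
  "lie_isomorphism sc br sc' br' \<phi> \<longleftrightarrow> bij \<phi> \<and>
     (\<forall>x y. \<phi> (x + y) = \<phi> x + \<phi> y) \<and> (\<forall>a x. \<phi> (sc a x) = sc' a (\<phi> x)) \<and>
     (\<forall>x y. \<phi> (br x y) = br' (\<phi> x) (\<phi> y))"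

definition isotopic ::
  "('k::field \<Rightarrow> 'L::ab_group_add \<Rightarrow> 'L) \<Rightarrow> ('L \<Rightarrow> 'L \<Rightarrow> 'L) \<Rightarrow>
   'v::euclidean_space set \<Rightarrow> ('v \<Rightarrow> 'g::ab_group_add \<Rightarrow> 'L set) \<Rightarrow>
   ('k \<Rightarrow> 'M::ab_group_add \<Rightarrow> 'M) \<Rightarrow> ('M \<Rightarrow> 'M \<Rightarrow> 'M) \<Rightarrow>
   'w::euclidean_space set \<Rightarrow> ('w \<Rightarrow> 'h::ab_group_add \<Rightarrow> 'M set) \<Rightarrow> bool" where
  "isotopic sc br \<Delta> G sc' br' \<Delta>' G' \<longleftrightarrow>
     (\<exists>\<phi> \<phi>r \<phi>e \<phi>s. lie_isomorphism sc br sc' br' \<phi> \<and>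
        bij_betw \<phi>r (root_lattice \<Delta>) (root_lattice \<Delta>') \<and>
        (\<forall>\<alpha>\<in>root_lattice \<Delta>. \<forall>\<beta>\<in>root_lattice \<Delta>. \<phi>r (\<alpha> + \<beta>) = \<phi>r \<alpha> + \<phi>r \<beta>) \<and>
        bij \<phi>e \<and> (\<forall>l m. \<phi>e (l + m) = \<phi>e l + \<phi>e m) \<and>
        (\<forall>\<alpha>\<in>root_lattice \<Delta>. \<forall>\<beta>\<in>root_lattice \<Delta>. \<phi>s (\<alpha> + \<beta>) = \<phi>s \<alpha> + \<phi>s \<beta>) \<and>
        (\<forall>\<alpha>\<in>root_lattice \<Delta>. \<forall>l. \<phi> ` G \<alpha> l = G' (\<phi>r \<alpha>) (\<phi>e l + \<phi>s \<alpha>)))"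

end

theory Submission imports Defs begin

lemma sum_hom:
  fixes F :: "'a::ab_group_add \<Rightarrow> 'b::ab_group_add"
  assumes "\<And>y z. F (y + z) = F y + F z"
  shows "F (sum g S) = (\<Sum>i\<in>S. F (g i))"
proof -
  have z: "F 0 = (0::'b::ab_group_add)"
    using assms[of 0 0] by simp
  show ?thesis
  proof (cases "finite S")
    case True then show ?thesis by (induction S rule: finite_induct) (auto simp: z assms)
  qed (simp add: z)
qed

lemma lt_la: "lie_torus sc br \<Delta> G \<Longrightarrow> lie_algebra sc br"
  unfolding lie_torus_def by (elim conjE) assumption
lemma lt_rs: "lie_torus sc br \<Delta> G \<Longrightarrow> irred_finite_root_system \<Delta>"
  unfolding lie_torus_def by (elim conjE) assumption
lemma lt_md: assumes "lie_torus sc br \<Delta> G" shows "module sc"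
  using lt_la[OF assms] unfolding lie_algebra_def module_iff_vector_space by (elim conjE)
lemma lt_sub0: "lie_torus sc br \<Delta> G \<Longrightarrow> \<forall>\<alpha> l. module.subspace sc (G \<alpha> l)"
  unfolding lie_torus_def by (elim conjE) assumption
lemma lt_sub: assumes "lie_torus sc br \<Delta> G" shows "module.subspace sc (G \<alpha> l)"
  using lt_sub0[OF assms] by (elim allE)
lemma lt_0: "lie_torus sc br \<Delta> G \<Longrightarrow> 0 \<in> G \<alpha> l"
  by (rule module.subspace_0[OF lt_md lt_sub])
lemma lt_scale: "lie_torus sc br \<Delta> G \<Longrightarrow> x \<in> G \<alpha> l \<Longrightarrow> sc a x \<in> G \<alpha> l"
  by (rule module.subspace_scale[OF lt_md lt_sub])
lemma lt_out0: "lie_torus sc br \<Delta> G \<Longrightarrow> \<forall>\<alpha> l. \<alpha> \<notin> root_lattice \<Delta> \<longrightarrow> G \<alpha> l = {0}"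
  unfolding lie_torus_def by (elim conjE) assumption
lemma lt_out: assumes "lie_torus sc br \<Delta> G" "\<alpha> \<notin> root_lattice \<Delta>" shows "G \<alpha> l = {0}"
  using lt_out0[OF assms(1)] assms(2) by blast
lemma lt_out_zero: assumes "lie_torus sc br \<Delta> G" "\<alpha> \<notin> root_lattice \<Delta>" "x \<in> G \<alpha> l" shows "x = 0"
  using assms(3) unfolding lt_out[OF assms(1,2)] by simp
lemma lt_out_mem: assumes "lie_torus sc br \<Delta> G" "x \<in> G \<alpha> l" "x \<noteq> 0" shows "\<alpha> \<in> root_lattice \<Delta>"
  using lt_out_zero[OF assms(1) _ assms(2)] assms(3) by blast
lemma lt_LT1: "lie_torus sc br \<Delta> G \<Longrightarrow> {\<alpha>. root_space G \<alpha> \<noteq> {0}} = \<Delta>"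
  unfolding lie_torus_def by (elim conjE) assumption
lemma lt_LT20: "lie_torus sc br \<Delta> G \<Longrightarrow> (\<forall>\<alpha>\<in>\<Delta> - {0}. \<forall>l. G \<alpha> l \<noteq> {0} \<longrightarrow>
        (\<exists>e\<in>G \<alpha> l. \<exists>f\<in>G (- \<alpha>) (- l).
           G \<alpha> l = range (\<lambda>a. sc a e) \<and> G (- \<alpha>) (- l) = range (\<lambda>a. sc a f) \<and>
           (\<forall>\<beta>\<in>root_lattice \<Delta>. \<forall>x\<in>root_space G \<beta>.
              br (br e f) x = sc (of_int (coroot_int \<beta> \<alpha>)) x)))"
  unfolding lie_torus_def by (elim conjE) assumption
lemma lt_LT2: assumes "lie_torus sc br \<Delta> G" "\<alpha>\<in>\<Delta> - {0}" "G \<alpha> l \<noteq> {0}" shows "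
        (\<exists>e\<in>G \<alpha> l. \<exists>f\<in>G (- \<alpha>) (- l).
           G \<alpha> l = range (\<lambda>a. sc a e) \<and> G (- \<alpha>) (- l) = range (\<lambda>a. sc a f) \<and>
           (\<forall>\<beta>\<in>root_lattice \<Delta>. \<forall>x\<in>root_space G \<beta>.
              br (br e f) x = sc (of_int (coroot_int \<beta> \<alpha>)) x))"
  using lt_LT20[OF assms(1)] assms(2,3) by blast

lemma lt_uniq:
  assumes "lie_torus sc br \<Delta> G"
    and "finite {p. c1 (fst p) (snd p) \<noteq> 0}" "\<forall>\<alpha> l. c1 \<alpha> l \<in> G \<alpha> l"
    "x = (\<Sum>p\<in>{p. c1 (fst p) (snd p) \<noteq> 0}. c1 (fst p) (snd p))"
    and "finite {p. c2 (fst p) (snd p) \<noteq> 0}" "\<forall>\<alpha> l. c2 \<alpha> l \<in> G \<alpha> l"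
    "x = (\<Sum>p\<in>{p. c2 (fst p) (snd p) \<noteq> 0}. c2 (fst p) (snd p))"
  shows "c1 = c2"
proof -
  from assms(1) have "\<forall>x. \<exists>!c. finite {p. c (fst p) (snd p) \<noteq> 0} \<and>
          (\<forall>\<alpha> l. c \<alpha> l \<in> G \<alpha> l) \<and>
          x = (\<Sum>p\<in>{p. c (fst p) (snd p) \<noteq> 0}. c (fst p) (snd p))"
    unfolding lie_torus_def by (elim conjE) assumption
  then have "\<exists>!c. finite {p. c (fst p) (snd p) \<noteq> 0} \<and>
          (\<forall>\<alpha> l. c \<alpha> l \<in> G \<alpha> l) \<and>
          x = (\<Sum>p\<in>{p. c (fst p) (snd p) \<noteq> 0}. c (fst p) (snd p))" by (rule spec)
  then show ?thesis using assms(2-) by blast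
qed

lemma zero_single:
  assumes lt: "lie_torus sc br \<Delta> G" and fin: "finite S"
    and f: "\<And>\<beta>. \<beta> \<in> S \<Longrightarrow> f \<beta> \<in> G \<beta> n" and s: "sum f S = 0" and b: "\<beta> \<in> S"
  shows "f \<beta> = 0"
proof -
  define c1 where "c1 = (\<lambda>\<beta> m. if m = n \<and> \<beta> \<in> S then f \<beta> else 0)"
  have sub: "{p. c1 (fst p) (snd p) \<noteq> 0} \<subseteq> S \<times> {n}" by (auto simp: c1_def split: if_splits)
  have fin1: "finite {p. c1 (fst p) (snd p) \<noteq> 0}" using sub fin finite_subset by blast
  have mem1: "\<forall>\<alpha> l. c1 \<alpha> l \<in> G \<alpha> l" using f lt_0[OF lt] by (auto simp: c1_def)
  have "(\<Sum>p\<in>{p. c1 (fst p) (snd p) \<noteq> 0}. c1 (fst p) (snd p)) = (\<Sum>p\<in>S \<times> {n}. c1 (fst p) (snd p))"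
    by (rule sum.mono_neutral_left) (use fin sub in auto)
  also have "\<dots> = (\<Sum>\<beta>\<in>S. c1 \<beta> n)"
  proof -
    have "S \<times> {n} = (\<lambda>\<beta>. (\<beta>,n)) ` S" by auto
    then show ?thesis by (simp add: sum.reindex inj_on_def)
  qed
  also have "\<dots> = sum f S" by (simp add: c1_def)
  finally have sum1: "0 = (\<Sum>p\<in>{p. c1 (fst p) (snd p) \<noteq> 0}. c1 (fst p) (snd p))" using s by simp
  have "c1 = (\<lambda>_ _. 0)"
    by (rule lt_uniq[OF lt fin1 mem1 sum1]) (auto simp: lt_0[OF lt])
  then have "c1 \<beta> n = 0" by simp
  then show ?thesis using b by (simp add: c1_def)
qed

lemma in_root_space: "y \<in> G \<beta> n \<Longrightarrow> y \<in> root_space G \<beta>"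
  unfolding root_space_def by (rule CollectI, rule exI[of _ "{n}"], rule exI[of _ "\<lambda>_. y"]) auto

lemma in_degree_space: "y \<in> G \<beta> n \<Longrightarrow> y \<in> degree_space G n"
  unfolding degree_space_def by (rule CollectI, rule exI[of _ "{\<beta>}"], rule exI[of _ "\<lambda>_. y"]) auto

lemma h_exists:
  assumes lt: "lie_torus sc br \<Delta> G" and g: "\<gamma> \<in> \<Delta> - {0}"
  shows "\<exists>h. \<forall>\<beta>\<in>root_lattice \<Delta>. \<forall>x\<in>root_space G \<beta>. br h x = sc (of_int (coroot_int \<beta> \<gamma>)) x"
proof -
  have "root_space G \<gamma> \<noteq> {0}" using lt_LT1[OF lt] g by blast
  moreover have "0 \<in> root_space G \<gamma>"
    unfolding root_space_def by (rule CollectI, rule exI[of _ "{}"]) auto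
  ultimately obtain x where "x \<in> root_space G \<gamma>" "x \<noteq> 0" by blast
  then obtain S f where S: "finite S" "\<forall>l\<in>S. f l \<in> G \<gamma> l" "x = sum f S" "sum f S \<noteq> 0"
    unfolding root_space_def by blast
  then obtain l where "l \<in> S" "f l \<noteq> 0" by (metis sum.neutral)
  then have "G \<gamma> l \<noteq> {0}" using S by force
  from lt_LT2[OF lt g this] show ?thesis by blast
qed

lemma pair_int:
  assumes rs: "irred_finite_root_system \<Delta>" and b: "\<beta> \<in> root_lattice \<Delta>" and g: "\<gamma> \<in> \<Delta> - {0}"
  shows "coroot_pair \<beta> \<gamma> \<in> \<int>"
proof -
  obtain c where bc: "\<beta> = (\<Sum>\<delta>\<in>\<Delta>. real_of_int (c \<delta>) *\<^sub>R \<delta>)" using b unfolding root_lattice_def by blast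
  have R: "root_system (\<Delta> - {0})" using rs unfolding irred_finite_root_system_def irreducible_root_system_def by blast
  have "coroot_pair \<beta> \<gamma> = (\<Sum>\<delta>\<in>\<Delta>. real_of_int (c \<delta>) * coroot_pair \<delta> \<gamma>)"
    unfolding bc coroot_pair_def by (simp add: inner_sum_left sum_distrib_left sum_divide_distrib algebra_simps)
  also have "\<dots> \<in> \<int>"
  proof (rule Ints_sum)
    fix \<delta> assume d: "\<delta> \<in> \<Delta>"
    have "coroot_pair \<delta> \<gamma> \<in> \<int>"
    proof (cases "\<delta> = 0")
      case True then show ?thesis by (simp add: coroot_pair_def)
    next
      case False then show ?thesis using R d g unfolding root_system_def by blast
    qed
    then show "real_of_int (c \<delta>) * coroot_pair \<delta> \<gamma> \<in> \<int>" by (simp add: Ints_mult)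
  qed
  finally show ?thesis .
qed

lemma pair_eq:
  assumes rs: "irred_finite_root_system \<Delta>" and a: "\<alpha> \<in> root_lattice \<Delta>" and b: "\<beta> \<in> root_lattice \<Delta>"
    and eq: "\<And>\<gamma>. \<gamma> \<in> \<Delta> - {0} \<Longrightarrow> coroot_int \<beta> \<gamma> = coroot_int \<alpha> \<gamma>"
  shows "\<beta> = \<alpha>"
proof -
  have R: "root_system (\<Delta> - {0})" using rs unfolding irred_finite_root_system_def irreducible_root_system_def by blast
  have orth: "orthogonal (\<beta> - \<alpha>) \<gamma>" if g: "\<gamma> \<in> \<Delta> - {0}" for \<gamma>
  proof -
    obtain i where i: "coroot_pair \<beta> \<gamma> = of_int i" using pair_int[OF rs b g] by (auto elim: Ints_cases)
    obtain j where j: "coroot_pair \<alpha> \<gamma> = of_int j" using pair_int[OF rs a g] by (auto elim: Ints_cases)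
    have "i = j" using eq[OF g] i j by (simp add: coroot_int_def)
    then have "coroot_pair \<beta> \<gamma> = coroot_pair \<alpha> \<gamma>" using i j by simp
    moreover have "\<gamma> \<bullet> \<gamma> \<noteq> 0" using g by simp
    ultimately have "\<beta> \<bullet> \<gamma> = \<alpha> \<bullet> \<gamma>" by (simp add: coroot_pair_def)
    then show ?thesis by (simp add: orthogonal_def inner_diff_left)
  qed
  have "span (\<Delta> - {0}) = UNIV" using R unfolding root_system_def by blast
  then have "orthogonal (\<beta> - \<alpha>) (\<beta> - \<alpha>)" using orthogonal_to_span[of "\<beta> - \<alpha>" "\<Delta> - {0}" "\<beta> - \<alpha>"] orth by blast
  then show ?thesis by (simp add: orthogonal_def)
qed



lemma hom_neg:
  fixes f :: "'a::ab_group_add \<Rightarrow> 'b::ab_group_add"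
  assumes "\<And>x y. f (x + y) = f x + f y"
  shows "f (- x) = - f x"
proof -
  have z: "f 0 = 0" using assms[of 0 0] by simp
  have "f (- x) + f x = 0" using assms[of "-x" x] z by simp
  then show ?thesis by (simp add: eq_neg_iff_add_eq_0)
qed

lemma cent_pres:
  fixes sc :: "'k::field_char_0 \<Rightarrow> 'L::ab_group_add \<Rightarrow> 'L" and br :: "'L \<Rightarrow> 'L \<Rightarrow> 'L"
    and \<Delta> :: "'v::euclidean_space set" and G :: "'v \<Rightarrow> 'g::ab_group_add \<Rightarrow> 'L set"
  assumes lt: "lie_torus sc br \<Delta> G" and c: "c \<in> centroid_deg sc br G l" and x: "x \<in> G \<alpha> m"
  shows "c x \<in> G \<alpha> (m + l)"
proof -
  have md: "module sc" using lt_md[OF lt] .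
  have vs: "vector_space sc" using md by (simp add: module_iff_vector_space)
  have la: "lie_algebra sc br" using lt_la[OF lt] .
  from c have cadd: "\<And>y z. c (y+z) = c y + c z" and csc: "\<And>a y. c (sc a y) = sc a (c y)"
    and cbr: "\<And>y z. c (br y z) = br y (c z)"
    and cdeg: "\<And>m. c ` degree_space G m \<subseteq> degree_space G (m + l)"
    unfolding centroid_deg_def centroid_def by blast+
  have c0: "c 0 = 0" using cadd[of 0 0] by simp
  have bradd: "\<And>h y z. br h (y+z) = br h y + br h z" using la unfolding lie_algebra_def by blast
  have br0: "br h 0 = 0" for h using bradd[of h 0 0] by simp
  have sc0: "\<And>a. sc a 0 = 0" using module.scale_zero_right[OF md] .
  show ?thesis
  proof (cases "x = 0")
    case True then show ?thesis using c0 lt_0[OF lt] by simp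
  next
    case False
    then have a: "\<alpha> \<in> root_lattice \<Delta>" by (rule lt_out_mem[OF lt x])
    have "c x \<in> degree_space G (m + l)" using cdeg in_degree_space[of x G \<alpha> m, OF x] by blast
    then obtain S f where S: "finite S" "\<And>\<beta>. \<beta> \<in> S \<Longrightarrow> f \<beta> \<in> G \<beta> (m + l)" "c x = sum f S"
      unfolding degree_space_def by blast
    have fz: "f \<beta> = 0" if b: "\<beta> \<in> S" "\<beta> \<noteq> \<alpha>" for \<beta>
    proof (rule ccontr)
      assume nz: "f \<beta> \<noteq> 0"
      then have bl: "\<beta> \<in> root_lattice \<Delta>" by (rule lt_out_mem[OF lt S(2)[OF b(1)]])
      have "\<beta> = \<alpha>"
      proof (rule pair_eq[OF lt_rs[OF lt] a bl])
        fix \<gamma> assume g: "\<gamma> \<in> \<Delta> - {0}"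
        obtain h where h: "\<And>\<delta> y. \<delta> \<in> root_lattice \<Delta> \<Longrightarrow> y \<in> root_space G \<delta> \<Longrightarrow>
             br h y = sc (of_int (coroot_int \<delta> \<gamma>)) y"
          using h_exists[OF lt g] by blast
        define k where "k \<delta> = (of_int (coroot_int \<delta> \<gamma>) :: 'k)" for \<delta>
        have hf: "br h (f \<delta>) = sc (k \<delta>) (f \<delta>)" if d: "\<delta> \<in> S" for \<delta>
        proof (cases "\<delta> \<in> root_lattice \<Delta>")
          case True then show ?thesis using h in_root_space[of "f \<delta>" G \<delta> "m+l", OF S(2)[OF d]] k_def by simp
        next
          case False then have "f \<delta> = 0" by (rule lt_out_zero[OF lt _ S(2)[OF d]])
          then show ?thesis using br0 sc0 by simp
        qed
        have e1: "br h (c x) = sc (k \<alpha>) (c x)"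
          using cbr[of h x] h[OF a in_root_space[of x G \<alpha> m, OF x]] csc k_def by simp
        have e2: "br h (c x) = (\<Sum>\<delta>\<in>S. sc (k \<delta>) (f \<delta>))"
          using S(3) sum_hom[of "br h" f S] bradd hf by simp
        have "(\<Sum>\<delta>\<in>S. sc (k \<delta> - k \<alpha>) (f \<delta>)) = (\<Sum>\<delta>\<in>S. sc (k \<delta>) (f \<delta>)) - sc (k \<alpha>) (sum f S)"
          by (simp add: module.scale_left_diff_distrib[OF md] module.scale_sum_right[OF md] sum_subtractf)
        also have "\<dots> = 0" using e1 e2 S(3) by simp
        finally have sumeq: "(\<Sum>\<delta>\<in>S. sc (k \<delta> - k \<alpha>) (f \<delta>)) = 0" .
        have "(\<lambda>\<delta>. sc (k \<delta> - k \<alpha>) (f \<delta>)) \<beta> = 0"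
          by (rule zero_single[OF lt S(1), where f="\<lambda>\<delta>. sc (k \<delta> - k \<alpha>) (f \<delta>)" and n="m+l"])
             (auto intro: lt_scale[OF lt] S(2) simp: sumeq b(1))
        then have "k \<beta> = k \<alpha>" using nz vector_space.scale_eq_0_iff[OF vs] by simp
        then show "coroot_int \<beta> \<gamma> = coroot_int \<alpha> \<gamma>" by (simp add: k_def)
      qed
      with b show False by simp
    qed
    have "c x = sum f (S \<inter> {\<alpha>})"
      unfolding S(3) by (rule sum.mono_neutral_right) (use S(1) fz in auto)
    then show ?thesis
    proof (cases "\<alpha> \<in> S")
      case True
      then have "S \<inter> {\<alpha>} = {\<alpha>}" by auto
      then show ?thesis using \<open>c x = sum f (S \<inter> {\<alpha>})\<close> S(2)[OF True] by simp
    next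
      case False
      then have "S \<inter> {\<alpha>} = {}" by auto
      then show ?thesis using \<open>c x = sum f (S \<inter> {\<alpha>})\<close> lt_0[OF lt] by simp
    qed
  qed
qed

lemma inv_iso:
  assumes iso: "lie_isomorphism sc br sc' br' \<phi>"
  shows "lie_isomorphism sc' br' sc br ((inv_into UNIV \<phi>))"
proof -
  have b: "bij \<phi>" and ad: "\<And>x y. \<phi> (x+y) = \<phi> x + \<phi> y" and s: "\<And>a x. \<phi> (sc a x) = sc' a (\<phi> x)"
    and r: "\<And>x y. \<phi> (br x y) = br' (\<phi> x) (\<phi> y)" using iso unfolding lie_isomorphism_def by auto
  have fi: "\<And>y. \<phi> ((inv_into UNIV \<phi>) y) = y" using b by (simp add: bij_is_surj surj_f_inv_f)
  have inj: "inj \<phi>" using b bij_is_inj by auto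
  have "(inv_into UNIV \<phi>) (x+y) = (inv_into UNIV \<phi>) x + (inv_into UNIV \<phi>) y" for x y by (rule injD[OF inj]) (simp add: ad fi)
  moreover have "(inv_into UNIV \<phi>) (sc' a x) = sc a ((inv_into UNIV \<phi>) x)" for a x by (rule injD[OF inj]) (simp add: s fi)
  moreover have "(inv_into UNIV \<phi>) (br' x y) = br ((inv_into UNIV \<phi>) x) ((inv_into UNIV \<phi>) y)" for x y by (rule injD[OF inj]) (simp add: r fi)
  ultimately have h1: "\<And>x y. (inv_into UNIV \<phi>) (x+y) = (inv_into UNIV \<phi>) x + (inv_into UNIV \<phi>) y"
    and h2: "\<And>a x. (inv_into UNIV \<phi>) (sc' a x) = sc a ((inv_into UNIV \<phi>) x)"
    and h3: "\<And>x y. (inv_into UNIV \<phi>) (br' x y) = br ((inv_into UNIV \<phi>) x) ((inv_into UNIV \<phi>) y)"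
    by blast+
  have h0: "bij (inv_into UNIV \<phi>)" by (rule bij_imp_bij_inv[OF b])
  show ?thesis unfolding lie_isomorphism_def
    by (intro conjI allI h0 h1 h2 h3)
qed

lemma zero_cd:
  assumes lt: "lie_torus sc br \<Delta> G"
  shows "(\<lambda>x. 0) \<in> centroid_deg sc br G l"
proof -
  have md: "module sc" using lt_md[OF lt] .
  have la: "lie_algebra sc br" using lt_la[OF lt] .
  have bradd: "\<And>h y z. br h (y+z) = br h y + br h z" and bradd2: "\<And>h y z. br (y+z) h = br y h + br z h"
    using la unfolding lie_algebra_def by blast+
  have br0: "br h 0 = 0" for h using bradd[of h 0 0] by simp
  have br0': "br 0 h = 0" for h using bradd2[of 0 0 h] by simp
  have sc0: "\<And>a. sc a 0 = 0" using module.scale_zero_right[OF md] .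
  have z: "0 \<in> degree_space G m" for m
    unfolding degree_space_def by (rule CollectI, rule exI[of _ "{}"]) auto
  have c: "(\<lambda>x. 0) \<in> centroid sc br" unfolding centroid_def by (simp add: br0 br0' sc0)
  have "(\<lambda>x. 0) ` degree_space G m \<subseteq> degree_space G (m + l)" for m
    using z[of "m+l"] by (simp add: image_subset_iff)
  then show ?thesis unfolding centroid_deg_def using c by blast
qed

lemma transfer:
  fixes sc :: "'k::field_char_0 \<Rightarrow> 'L::ab_group_add \<Rightarrow> 'L" and br :: "'L \<Rightarrow> 'L \<Rightarrow> 'L"
    and \<Delta> :: "'v::euclidean_space set" and G :: "'v \<Rightarrow> 'g::ab_group_add \<Rightarrow> 'L set"
    and sc' :: "'k \<Rightarrow> 'M::ab_group_add \<Rightarrow> 'M" and br' :: "'M \<Rightarrow> 'M \<Rightarrow> 'M"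
    and \<Delta>' :: "'w::euclidean_space set" and G' :: "'w \<Rightarrow> 'h::ab_group_add \<Rightarrow> 'M set"
    and \<phi> :: "'L \<Rightarrow> 'M" and \<phi>r :: "'v \<Rightarrow> 'w" and \<phi>e :: "'g \<Rightarrow> 'h" and \<phi>s :: "'v \<Rightarrow> 'h"
  assumes lt: "lie_torus sc br \<Delta> G" and lt': "lie_torus sc' br' \<Delta>' G'"
    and iso: "lie_isomorphism sc br sc' br' \<phi>"
    and rl: "\<phi>r ` root_lattice \<Delta> = root_lattice \<Delta>'"
    and be: "bij \<phi>e" and ae: "\<And>l m. \<phi>e (l+m) = \<phi>e l + \<phi>e m"
    and gm: "\<And>\<alpha> l. \<alpha> \<in> root_lattice \<Delta> \<Longrightarrow> \<phi> ` G \<alpha> l = G' (\<phi>r \<alpha>) (\<phi>e l + \<phi>s \<alpha>)"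
    and l: "l \<in> Gamma sc br G"
  shows "\<phi>e l \<in> Gamma sc' br' G'"
proof -
  obtain c where c: "c \<in> centroid_deg sc br G l" and cnz: "c \<noteq> (\<lambda>x. 0)"
    using l zero_cd[OF lt, of l] unfolding Gamma_def by blast
  from c have cadd: "\<And>y z. c (y+z) = c y + c z" and csc: "\<And>a y. c (sc a y) = sc a (c y)"
    and cbr: "\<And>y z. c (br y z) = br y (c z)" and cbr2: "\<And>y z. c (br y z) = br (c y) z"
    unfolding centroid_deg_def centroid_def by blast+
  have b: "bij \<phi>" and ad: "\<And>x y. \<phi> (x+y) = \<phi> x + \<phi> y" and s: "\<And>a x. \<phi> (sc a x) = sc' a (\<phi> x)"
    and r: "\<And>x y. \<phi> (br x y) = br' (\<phi> x) (\<phi> y)" using iso unfolding lie_isomorphism_def by auto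
  have iad: "\<And>x y. (inv_into UNIV \<phi>) (x+y) = (inv_into UNIV \<phi>) x + (inv_into UNIV \<phi>) y" and isc: "\<And>a x. (inv_into UNIV \<phi>) (sc' a x) = sc a ((inv_into UNIV \<phi>) x)"
    and ir: "\<And>x y. (inv_into UNIV \<phi>) (br' x y) = br ((inv_into UNIV \<phi>) x) ((inv_into UNIV \<phi>) y)"
    using inv_iso[OF iso] unfolding lie_isomorphism_def by auto
  have fi: "\<And>y. \<phi> ((inv_into UNIV \<phi>) y) = y" using b by (simp add: bij_is_surj surj_f_inv_f)
  have inj: "inj \<phi>" using b bij_is_inj by auto
  have if_: "\<And>x. (inv_into UNIV \<phi>) (\<phi> x) = x" using inj by (simp add: inv_f_f)
  define c' where "c' = (\<lambda>y. \<phi> (c ((inv_into UNIV \<phi>) y)))"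
  have c'add: "\<And>y z. c' (y+z) = c' y + c' z" by (simp add: c'_def iad cadd ad)
  have c'0: "c' 0 = 0" using c'add[of 0 0] by simp
  have "c' \<in> centroid sc' br'"
  proof -
    have 1: "c' (br' x y) = br' (c' x) y" for x y by (simp add: c'_def ir cbr2 r fi)
    have 2: "c' (br' x y) = br' x (c' y)" for x y by (simp add: c'_def ir cbr r fi)
    have 3: "c' (sc' a x) = sc' a (c' x)" for a x by (simp add: c'_def isc csc s)
    show ?thesis unfolding centroid_def using c'add 1 2 3 by blast
  qed
  moreover have "c' ` degree_space G' m' \<subseteq> degree_space G' (m' + \<phi>e l)" for m'
  proof
    fix z assume "z \<in> c' ` degree_space G' m'"
    then obtain y where y: "y \<in> degree_space G' m'" "z = c' y" by blast
    then obtain S f where S: "finite S" "\<And>\<alpha>'. \<alpha>' \<in> S \<Longrightarrow> f \<alpha>' \<in> G' \<alpha>' m'" "y = sum f S"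
      unfolding degree_space_def by blast
    have zs: "z = (\<Sum>\<alpha>'\<in>S. c' (f \<alpha>'))" using y(2) S(3) sum_hom[of c' f S] c'add by simp
    have mem: "c' (f \<alpha>') \<in> G' \<alpha>' (m' + \<phi>e l)" if a': "\<alpha>' \<in> S" for \<alpha>'
    proof (cases "\<alpha>' \<in> root_lattice \<Delta>'")
      case False
      then have "f \<alpha>' = 0" by (rule lt_out_zero[OF lt' _ S(2)[OF a']])
      then show ?thesis by (simp only: c'0 lt_0[OF lt'])
    next
      case True
      have "\<alpha>' \<in> \<phi>r ` root_lattice \<Delta>" using True by (simp only: rl)
      then obtain \<alpha> where a0: "\<alpha>' = \<phi>r \<alpha>" "\<alpha> \<in> root_lattice \<Delta>" by (rule imageE)
      have a: "\<alpha> \<in> root_lattice \<Delta>" "\<phi>r \<alpha> = \<alpha>'" using a0 by simp_all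
      define m where "m = (inv_into UNIV \<phi>e) (m' - \<phi>s \<alpha>)"
      have em: "\<phi>e m = m' - \<phi>s \<alpha>" using be by (simp add: m_def bij_is_surj surj_f_inv_f)
      have e4: "\<phi>e m + \<phi>s \<alpha> = m'" unfolding em by simp
      have "G' \<alpha>' m' = \<phi> ` G \<alpha> m" by (simp only: gm[OF a(1)] a(2) e4)
      then have "f \<alpha>' \<in> \<phi> ` G \<alpha> m" using S(2)[OF a'] by simp
      then obtain x where x: "x \<in> G \<alpha> m" "f \<alpha>' = \<phi> x" by blast
      have e2: "\<phi>e (m + l) + \<phi>s \<alpha> = m' + \<phi>e l" unfolding ae em by (simp add: algebra_simps)
      have e3: "\<phi> ` G \<alpha> (m + l) = G' \<alpha>' (m' + \<phi>e l)" by (simp only: gm[OF a(1)] a(2) e2)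
      have "c' (f \<alpha>') = \<phi> (c x)" using x(2) by (simp add: c'_def if_)
      also have "\<dots> \<in> \<phi> ` G \<alpha> (m + l)" by (rule imageI[OF cent_pres[OF lt c x(1)]])
      also have "\<dots> = G' \<alpha>' (m' + \<phi>e l)" by (rule e3)
      finally show ?thesis .
    qed
    show "z \<in> degree_space G' (m' + \<phi>e l)"
      unfolding degree_space_def
    proof (rule CollectI, rule exI[of _ S], rule exI[of _ "\<lambda>\<alpha>'. c' (f \<alpha>')"], intro conjI ballI)
      show "finite S" by (rule S(1))
      show "z = (\<Sum>\<alpha>'\<in>S. c' (f \<alpha>'))" by (rule zs)
      fix \<alpha>' assume "\<alpha>' \<in> S" then show "c' (f \<alpha>') \<in> G' \<alpha>' (m' + \<phi>e l)" by (rule mem)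
    qed
  qed
  ultimately have c'd: "c' \<in> centroid_deg sc' br' G' (\<phi>e l)" unfolding centroid_deg_def by blast
  obtain x0 where "c x0 \<noteq> 0" using cnz by blast
  moreover have "\<phi> 0 = 0" using ad[of 0 0] by simp
  ultimately have "c' (\<phi> x0) \<noteq> 0" using inj by (simp add: c'_def if_ inj_eq) (metis injD inj)
  then have "c' \<noteq> (\<lambda>x. 0)" by auto
  then show ?thesis using c'd unfolding Gamma_def by blast
qed


lemma carrier_addgrp[simp]: "carrier (addgrp TYPE('a::ab_group_add)) = UNIV"
  by (simp add: addgrp_def)
lemma mult_addgrp[simp]: "mult (addgrp TYPE('a::ab_group_add)) = (+)"
  by (simp add: addgrp_def)

lemma quot_iso:
  fixes f :: "'g::ab_group_add \<Rightarrow> 'h::ab_group_add"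
  assumes bf: "bij f" and ad: "\<And>x y. f (x+y) = f x + f y" and fA: "f ` A = B"
  shows "addgrp TYPE('g) Mod A \<cong> addgrp TYPE('h) Mod B"
proof -
  have rc: "\<And>a. f ` (A #>\<^bsub>addgrp TYPE('g)\<^esub> a) = B #>\<^bsub>addgrp TYPE('h)\<^esub> (f a)"
    using fA by (force simp: r_coset_def ad)
  have sm: "\<And>X Y. f ` (X <#>\<^bsub>addgrp TYPE('g)\<^esub> Y) = (f ` X) <#>\<^bsub>addgrp TYPE('h)\<^esub> (f ` Y)"
    by (simp add: set_mult_def image_UN ad)
  have inj: "inj f" using bf bij_is_inj by blast
  have "(\<lambda>X. f ` X) \<in> iso (addgrp TYPE('g) Mod A) (addgrp TYPE('h) Mod B)"
    unfolding iso_def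
  proof (intro CollectI conjI)
    show "(\<lambda>X. f ` X) \<in> hom (addgrp TYPE('g) Mod A) (addgrp TYPE('h) Mod B)"
    proof (rule homI)
      fix x assume "x \<in> carrier (addgrp TYPE('g) Mod A)"
      then obtain a where "x = A #>\<^bsub>addgrp TYPE('g)\<^esub> a" by (auto simp: FactGroup_def RCOSETS_def)
      then show "f ` x \<in> carrier (addgrp TYPE('h) Mod B)" by (auto simp: FactGroup_def RCOSETS_def rc)
    next
      fix x y show "f ` (x \<otimes>\<^bsub>addgrp TYPE('g) Mod A\<^esub> y) = f ` x \<otimes>\<^bsub>addgrp TYPE('h) Mod B\<^esub> f ` y"
        by (simp add: FactGroup_def sm)
    qed
    show "bij_betw (\<lambda>X. f ` X) (carrier (addgrp TYPE('g) Mod A)) (carrier (addgrp TYPE('h) Mod B))"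
    proof (rule bij_betwI')
      show "\<And>x y. (f ` x = f ` y) = (x = y)" using inj by (simp add: inj_image_eq_iff)
      show "\<And>x. x \<in> carrier (addgrp TYPE('g) Mod A) \<Longrightarrow> f ` x \<in> carrier (addgrp TYPE('h) Mod B)"
        by (auto simp: FactGroup_def RCOSETS_def rc)
      fix y assume "y \<in> carrier (addgrp TYPE('h) Mod B)"
      then obtain b where y: "y = B #>\<^bsub>addgrp TYPE('h)\<^esub> b" by (auto simp: FactGroup_def RCOSETS_def)
      have "f ((inv_into UNIV f) b) = b" using bf by (simp add: bij_is_surj surj_f_inv_f)
      then have "y = f ` (A #>\<^bsub>addgrp TYPE('g)\<^esub> (inv_into UNIV f) b)" using y rc by simp
      then show "\<exists>x\<in>carrier (addgrp TYPE('g) Mod A). y = f ` x"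
        by (auto simp: FactGroup_def RCOSETS_def)
    qed
  qed
  then show ?thesis by (rule is_isoI)
qed

theorem proposition7p1:
  fixes sc :: "'k::field_char_0 \<Rightarrow> 'L::ab_group_add \<Rightarrow> 'L" and br :: "'L \<Rightarrow> 'L \<Rightarrow> 'L"
    and \<Delta> :: "'v::euclidean_space set" and G :: "'v \<Rightarrow> 'g::ab_group_add \<Rightarrow> 'L set"
    and sc' :: "'k \<Rightarrow> 'M::ab_group_add \<Rightarrow> 'M" and br' :: "'M \<Rightarrow> 'M \<Rightarrow> 'M"
    and \<Delta>' :: "'w::euclidean_space set" and G' :: "'w \<Rightarrow> 'h::ab_group_add \<Rightarrow> 'M set"
  assumes "lie_torus sc br \<Delta> G" and "centreless br"
    and "lie_torus sc' br' \<Delta>' G'" and "centreless br'"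
    and "isotopic sc br \<Delta> G sc' br' \<Delta>' G'"
  shows "addgrp TYPE('g) Mod Gamma sc br G \<cong> addgrp TYPE('h) Mod Gamma sc' br' G'"
proof -
  note lt = assms(1) and lt' = assms(3)
  obtain \<phi> :: "'L \<Rightarrow> 'M" and \<phi>r :: "'v \<Rightarrow> 'w" and \<phi>e :: "'g \<Rightarrow> 'h" and \<phi>s :: "'v \<Rightarrow> 'h"
    where iso: "lie_isomorphism sc br sc' br' \<phi>"
      and br: "bij_betw \<phi>r (root_lattice \<Delta>) (root_lattice \<Delta>')"
      and "\<forall>\<alpha>\<in>root_lattice \<Delta>. \<forall>\<beta>\<in>root_lattice \<Delta>. \<phi>r (\<alpha> + \<beta>) = \<phi>r \<alpha> + \<phi>r \<beta>"
      and be: "bij \<phi>e" and ae0: "\<forall>l m. \<phi>e (l + m) = \<phi>e l + \<phi>e m"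
      and "\<forall>\<alpha>\<in>root_lattice \<Delta>. \<forall>\<beta>\<in>root_lattice \<Delta>. \<phi>s (\<alpha> + \<beta>) = \<phi>s \<alpha> + \<phi>s \<beta>"
      and gm0: "\<forall>\<alpha>\<in>root_lattice \<Delta>. \<forall>l. \<phi> ` G \<alpha> l = G' (\<phi>r \<alpha>) (\<phi>e l + \<phi>s \<alpha>)"
    using assms(5) unfolding isotopic_def by (elim exE conjE) (rule that, assumption+)
  have ae: "\<And>l m. \<phi>e (l + m) = \<phi>e l + \<phi>e m" using ae0 by blast
  have gm: "\<And>\<alpha> l. \<alpha>\<in>root_lattice \<Delta> \<Longrightarrow> \<phi> ` G \<alpha> l = G' (\<phi>r \<alpha>) (\<phi>e l + \<phi>s \<alpha>)"
    using gm0 by blast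
  have rl: "\<phi>r ` root_lattice \<Delta> = root_lattice \<Delta>'" using br bij_betw_imp_surj_on by blast
  have g1: "\<phi>e l \<in> Gamma sc' br' G'" if "l \<in> Gamma sc br G" for l
    by (rule transfer[OF lt lt' iso rl be ae gm that])
  define \<psi>r where "\<psi>r = inv_into (root_lattice \<Delta>) \<phi>r"
  define \<psi>s where "\<psi>s = (\<lambda>\<alpha>'. - (inv_into UNIV \<phi>e) (\<phi>s (\<psi>r \<alpha>')))"
  have rl2: "\<psi>r ` root_lattice \<Delta>' = root_lattice \<Delta>"
    using bij_betw_inv_into[OF br] bij_betw_imp_surj_on unfolding \<psi>r_def by blast
  have be2: "bij ((inv_into UNIV \<phi>e))" using bij_imp_bij_inv[OF be] .
  have fie: "\<And>y. \<phi>e ((inv_into UNIV \<phi>e) y) = y" using be by (simp add: bij_is_surj surj_f_inv_f)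
  have injE: "inj \<phi>e" using be bij_is_inj by auto
  have ae2: "\<And>l m. (inv_into UNIV \<phi>e) (l + m) = (inv_into UNIV \<phi>e) l + (inv_into UNIV \<phi>e) m"
    by (rule injD[OF injE]) (simp add: ae fie)
  have injP: "inj \<phi>" using iso unfolding lie_isomorphism_def using bij_is_inj by blast
  have gm2: "(inv_into UNIV \<phi>) ` G' \<alpha>' l' = G (\<psi>r \<alpha>') ((inv_into UNIV \<phi>e) l' + \<psi>s \<alpha>')" if a': "\<alpha>' \<in> root_lattice \<Delta>'" for \<alpha>' l'
  proof -
    have a'': "\<alpha>' \<in> \<phi>r ` root_lattice \<Delta>" using a' rl by simp
    have a: "\<psi>r \<alpha>' \<in> root_lattice \<Delta>" unfolding \<psi>r_def by (rule inv_into_into[OF a''])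
    have pa: "\<phi>r (\<psi>r \<alpha>') = \<alpha>'" unfolding \<psi>r_def by (rule f_inv_into_f[OF a''])
    have e1: "\<phi>e (\<psi>s \<alpha>') = - \<phi>s (\<psi>r \<alpha>')"
      unfolding \<psi>s_def using hom_neg[of \<phi>e, OF ae] fie by simp
    have "\<phi>e ((inv_into UNIV \<phi>e) l' + \<psi>s \<alpha>') + \<phi>s (\<psi>r \<alpha>') = l'"
      by (simp add: ae fie e1)
    then have "G' \<alpha>' l' = \<phi> ` G (\<psi>r \<alpha>') ((inv_into UNIV \<phi>e) l' + \<psi>s \<alpha>')" using gm[OF a] pa by simp
    then show ?thesis using injP by (simp add: image_inv_f_f)
  qed
  have g2: "(inv_into UNIV \<phi>e) l' \<in> Gamma sc br G" if "l' \<in> Gamma sc' br' G'" for l'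
    by (rule transfer[OF lt' lt inv_iso[OF iso] rl2 be2 ae2 gm2 that])
  have "\<phi>e ` Gamma sc br G = Gamma sc' br' G'"
  proof
    show "\<phi>e ` Gamma sc br G \<subseteq> Gamma sc' br' G'" using g1 by blast
    show "Gamma sc' br' G' \<subseteq> \<phi>e ` Gamma sc br G"
    proof
      fix l' assume "l' \<in> Gamma sc' br' G'"
      then have "(inv_into UNIV \<phi>e) l' \<in> Gamma sc br G" by (rule g2)
      then show "l' \<in> \<phi>e ` Gamma sc br G" using fie by (metis image_eqI)
    qed
  qed
  then show ?thesis by (rule quot_iso[OF be ae])
qed

end
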